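(* Let $s,r \ge 2$ and $q \ge 1$ be integers. If $R(s,q) \geq r$, then $Q(s,r) \leq q$.
   Context: The product dimension of a finite graph $G$ is the minimum possible number $d$ of proper vertex colorings of $G$ such that for every pair $u,v$ of distinct non-adjacent vertices there is at least one of the colorings in which $u$ and $v$ receive the same color. $K_s(r)$ denotes the graph consisting of $r$ pairwise vertex-disjoint copies of the complete graph $K_s$, and $Q(s,r)$ is the product dimension of $K_s(r)$. Let $Z_s$ be the ring of integers modulo $s$. For $A \subseteq Z_s$, a vector $v=(v_1,\dots,v_q)\in Z_s^q$ is $A$-covering if for every $a \in A$ there is $1 \le i \le q$ with $v_i = a$. A family $\mathcal{F} \subseteq Z_s^q$ is $A$-covering if for every ordered pair of distinct vectors $u,v \in \mathcal{F}$ the difference $u-v$ is $A$-covering; it is covering if it is $Z_s$-covering. $R(s,q)$ denotes the maximum possible cardinality of a covering family in $Z_s^q$. *)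

theory Defs
  imports Main
begin

definition proper_coloring :: "'v set \<Rightarrow> ('v \<Rightarrow> 'v \<Rightarrow> bool) \<Rightarrow> ('v \<Rightarrow> nat) \<Rightarrow> bool" where
  "proper_coloring V E c \<longleftrightarrow> (\<forall>u\<in>V. \<forall>v\<in>V. E u v \<longrightarrow> c u \<noteq> c v)"

definition product_dim :: "'v set \<Rightarrow> ('v \<Rightarrow> 'v \<Rightarrow> bool) \<Rightarrow> nat" where
  "product_dim V E = (LEAST d. \<exists>cs :: nat \<Rightarrow> 'v \<Rightarrow> nat.
      (\<forall>i<d. proper_coloring V E (cs i)) \<and>
      (\<forall>u\<in>V. \<forall>v\<in>V. u \<noteq> v \<and> \<not> E u v \<longrightarrow> (\<exists>i<d. cs i u = cs i v)))"

text \<open>K_s(r): r disjoint copies of K_s; vertex (k, j) is vertex j of copy k.\<close>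

definition Ks_vertices :: "nat \<Rightarrow> nat \<Rightarrow> (nat \<times> nat) set" where
  "Ks_vertices s r = {0..<r} \<times> {0..<s}"

definition Ks_edge :: "nat \<times> nat \<Rightarrow> nat \<times> nat \<Rightarrow> bool" where
  "Ks_edge x y \<longleftrightarrow> fst x = fst y \<and> snd x \<noteq> snd y"

definition Q :: "nat \<Rightarrow> nat \<Rightarrow> nat" where
  "Q s r = product_dim (Ks_vertices s r) Ks_edge"

text \<open>Vectors of Z_s^q are represented as lists of length q with entries in {0..<s}.\<close>

definition Zvecs :: "nat \<Rightarrow> nat \<Rightarrow> nat list set" where
  "Zvecs s q = {v. length v = q \<and> (\<forall>x\<in>set v. x < s)}"

definition diff_covering :: "nat \<Rightarrow> nat list \<Rightarrow> nat list \<Rightarrow> bool" where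
  "diff_covering s u v \<longleftrightarrow>
     (\<forall>a<s. \<exists>i<length u. (int (u ! i) - int (v ! i)) mod int s = int a)"

definition covering_family :: "nat \<Rightarrow> nat \<Rightarrow> nat list set \<Rightarrow> bool" where
  "covering_family s q F \<longleftrightarrow> F \<subseteq> Zvecs s q \<and>
     (\<forall>u\<in>F. \<forall>v\<in>F. u \<noteq> v \<longrightarrow> diff_covering s u v)"

definition R :: "nat \<Rightarrow> nat \<Rightarrow> nat" where
  "R s q = Max {card F | F. covering_family s q F}"

end

theory Submission
  imports Defs
begin

lemma Zvecs_finite: "finite (Zvecs s q)"
proof -
  have "Zvecs s q \<subseteq> {xs. set xs \<subseteq> {0..<s} \<and> length xs = q}"
    unfolding Zvecs_def by auto
  moreover have "finite {xs. set xs \<subseteq> {0..<s} \<and> length xs = q}"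
    by (rule finite_lists_length_eq) simp
  ultimately show ?thesis by (rule finite_subset)
qed

lemma exists_big_family:
  assumes "R s q \<ge> r"
  shows "\<exists>F. covering_family s q F \<and> card F \<ge> r"
proof -
  let ?S = "{card F | F. covering_family s q F}"
  have "?S \<subseteq> {0..card (Zvecs s q)}"
    using Zvecs_finite by (auto simp: covering_family_def card_mono)
  hence fin: "finite ?S" by (rule finite_subset) simp
  have "covering_family s q {}" by (simp add: covering_family_def)
  hence ne: "?S \<noteq> {}" by blast
  have "R s q \<in> ?S" unfolding R_def using Max_in[OF fin ne] .
  thus ?thesis using assms by auto
qed

theorem proposition1p2:
  fixes s r q :: nat
  assumes "s \<ge> 2" and "r \<ge> 2" and "q \<ge> 1"
    and "R s q \<ge> r"
  shows "Q s r \<le> q"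
proof -
  obtain F where F: "covering_family s q F" "card F \<ge> r"
    using exists_big_family[OF assms(4)] by blast
  have finF: "finite F" using F(1) Zvecs_finite
    unfolding covering_family_def by (meson finite_subset)
  obtain G where G: "G \<subseteq> F" "card G = r"
    using obtain_subset_with_card_n[OF F(2)] by blast
  have finG: "finite G" using G finF finite_subset by blast
  obtain h where h: "bij_betw h {0..<r} G"
    using ex_bij_betw_nat_finite[OF finG] unfolding G(2) by blast
  define cs where "cs = (\<lambda>i (x::nat\<times>nat). (h (fst x) ! i + snd x) mod s)"
  have spos: "s > 0" using assms(1) by simp
  have prp: "\<forall>i<q. proper_coloring (Ks_vertices s r) Ks_edge (cs i)"
  proof (intro allI impI)
    fix i assume "i < q"
    show "proper_coloring (Ks_vertices s r) Ks_edge (cs i)"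
      unfolding proper_coloring_def
    proof (intro ballI impI)
      fix u v assume u: "u \<in> Ks_vertices s r" and v: "v \<in> Ks_vertices s r"
        and e: "Ks_edge u v"
      obtain k j where uk: "u = (k, j)" by (cases u)
      obtain k' j' where vk: "v = (k', j')" by (cases v)
      have kk: "k' = k" and jj: "j \<noteq> j'" using e uk vk by (auto simp: Ks_edge_def)
      have js: "j < s" "j' < s" using u v uk vk by (auto simp: Ks_vertices_def)
      show "cs i u \<noteq> cs i v"
      proof
        assume "cs i u = cs i v"
        hence "(h k ! i + j) mod s = (h k ! i + j') mod s"
          using uk vk kk by (simp add: cs_def)
        hence "(int (h k ! i) + int j) mod int s = (int (h k ! i) + int j') mod int s"
          by (metis of_nat_add of_nat_mod)
        hence "((int (h k ! i) + int j) + (- int (h k ! i))) mod int s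
             = ((int (h k ! i) + int j') + (- int (h k ! i))) mod int s"
          by (rule mod_add_cong) simp
        hence "int j mod int s = int j' mod int s" by simp
        hence "j mod s = j' mod s" by (metis of_nat_mod of_nat_eq_iff)
        thus False using js jj by simp
      qed
    qed
  qed
  have cov: "\<forall>u\<in>Ks_vertices s r. \<forall>v\<in>Ks_vertices s r. u \<noteq> v \<and> \<not> Ks_edge u v
      \<longrightarrow> (\<exists>i<q. cs i u = cs i v)"
  proof (intro ballI impI)
    fix u v assume u: "u \<in> Ks_vertices s r" and v: "v \<in> Ks_vertices s r"
      and ne: "u \<noteq> v \<and> \<not> Ks_edge u v"
    obtain k j where uk: "u = (k, j)" by (cases u)
    obtain k' j' where vk: "v = (k', j')" by (cases v)
    have kk: "k \<noteq> k'" using ne uk vk by (auto simp: Ks_edge_def)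
    have ks: "k < r" "k' < r" "j < s" "j' < s" using u v uk vk by (auto simp: Ks_vertices_def)
    have hne: "h k \<noteq> h k'" using h ks kk by (auto simp: bij_betw_def inj_on_def)
    have hin: "h k \<in> F" "h k' \<in> F" using h ks G(1) by (auto simp: bij_betw_def)
    have dc: "diff_covering s (h k) (h k')"
      using F(1) hne hin by (auto simp: covering_family_def)
    have len: "length (h k) = q" using F(1) hin by (auto simp: covering_family_def Zvecs_def)
    define a where "a = nat ((int j' - int j) mod int s)"
    have a_eq: "int a = (int j' - int j) mod int s" unfolding a_def using spos by simp
    have "a < s" proof -
      have "int a < int s" using a_eq spos by simp
      thus ?thesis by simp
    qed
    then obtain i where i: "i < q" "(int (h k ! i) - int (h k' ! i)) mod int s = int a"
      using dc len unfolding diff_covering_def by auto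
    have "(int (h k ! i) - int (h k' ! i)) mod int s = (int j' - int j) mod int s"
      using i a_eq by simp
    hence "((int (h k ! i) - int (h k' ! i)) + (int (h k' ! i) + int j)) mod int s
         = ((int j' - int j) + (int (h k' ! i) + int j)) mod int s"
      by (rule mod_add_cong) simp
    hence "(int (h k ! i) + int j) mod int s = (int (h k' ! i) + int j') mod int s"
      by (simp add: add.commute)
    hence "int ((h k ! i + j) mod s) = int ((h k' ! i + j') mod s)"
      by (simp add: of_nat_mod)
    hence "cs i u = cs i v" using uk vk by (simp add: cs_def)
    thus "\<exists>i<q. cs i u = cs i v" using i by blast
  qed
  show ?thesis unfolding Q_def product_dim_def
    by (rule Least_le) (use prp cov in blast)
qed

end
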